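(* Let $R$ be a commutative ring. Let $A, A', N, N'$ be $R$-modules and let $\alpha : A \to N$, $\beta : N \to A$, $\alpha' : A' \to N'$ and $f : A \to A'$ be $R$-module morphisms. Let $V \subset N$ and $V' \subset N'$ be submodules such that $(\alpha' \circ f \circ \beta)(V) \subset V'$ and $(\alpha \circ \beta)(V) \subset V$. Suppose that the restriction $\alpha \circ \beta : V \to V$ is invertible. Then there exists a unique $R$-linear map $\tilde{f} : V \to V'$ such that $\tilde{f}(\alpha(x)) = \alpha'(f(x))$ for all $x \in \beta(V)$.
   Context: In the paper this is applied with $A = Z(M)$, $A' = Z(M')$, $f = Z(W)$ for a bordism $W : M \to M'$ and a TQFT $Z$ valued in $R$-modules, $\alpha = \alpha_M$, $\beta = \beta_M$, $\alpha' = \alpha_{M'}$, $V = V_M$, $V' = V_{M'}$; the statement above is the purely module-theoretic content. *)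

theory Defs
  imports Main "HOL.Modules"
begin

text \<open>Maps are represented
  by total HOL functions; only their values on V matter.\<close>
definition linear_map_between ::
  "('r::comm_ring_1 \<Rightarrow> 'm::ab_group_add \<Rightarrow> 'm) \<Rightarrow> ('r \<Rightarrow> 'n::ab_group_add \<Rightarrow> 'n)
   \<Rightarrow> 'm set \<Rightarrow> 'n set \<Rightarrow> ('m \<Rightarrow> 'n) \<Rightarrow> bool" where
  "linear_map_between s1 s2 V V' g \<longleftrightarrow>
     (\<forall>x\<in>V. g x \<in> V') \<and>
     (\<forall>x\<in>V. \<forall>y\<in>V. g (x + y) = g x + g y) \<and>
     (\<forall>c. \<forall>x\<in>V. g (s1 c x) = s2 c (g x))"

end

theory Submission
  imports Defs
begin

theorem mainTheorem1:
  fixes sA :: "'r::comm_ring_1 \<Rightarrow> 'a::ab_group_add \<Rightarrow> 'a"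
    and sA' :: "'r \<Rightarrow> 'a2::ab_group_add \<Rightarrow> 'a2"
    and sN :: "'r \<Rightarrow> 'n::ab_group_add \<Rightarrow> 'n"
    and sN' :: "'r \<Rightarrow> 'n2::ab_group_add \<Rightarrow> 'n2"
    and \<alpha> :: "'a \<Rightarrow> 'n" and \<beta> :: "'n \<Rightarrow> 'a"
    and \<alpha>' :: "'a2 \<Rightarrow> 'n2" and f :: "'a \<Rightarrow> 'a2"
    and V :: "'n set" and V' :: "'n2 set"
  assumes "module sA" and "module sA'" and "module sN" and "module sN'"
    and "module_hom sA sN \<alpha>" and "module_hom sN sA \<beta>"
    and "module_hom sA' sN' \<alpha>'" and "module_hom sA sA' f"
    and "module.subspace sN V" and "module.subspace sN' V'"
    and "(\<alpha>' \<circ> f \<circ> \<beta>) ` V \<subseteq> V'"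
    and "(\<alpha> \<circ> \<beta>) ` V \<subseteq> V"
    and "bij_betw (\<alpha> \<circ> \<beta>) V V"
  shows "\<exists>g. linear_map_between sN sN' V V' g
             \<and> (\<forall>x\<in>\<beta> ` V. g (\<alpha> x) = \<alpha>' (f x))
             \<and> (\<forall>h. linear_map_between sN sN' V V' h
                    \<and> (\<forall>x\<in>\<beta> ` V. h (\<alpha> x) = \<alpha>' (f x))
                    \<longrightarrow> (\<forall>v\<in>V. h v = g v))"
proof -
  interpret a: module_hom sA sN \<alpha> by fact
  interpret b: module_hom sN sA \<beta> by fact
  interpret a': module_hom sA' sN' \<alpha>' by fact
  interpret f: module_hom sA sA' f by fact
  have subV: "module.subspace sN V" by fact
  define p where "p = \<alpha> \<circ> \<beta>"
  define q where "q = inv_into V p"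
  have bij: "bij_betw p V V" using assms(13) p_def by simp
  have qV: "\<And>v. v \<in> V \<Longrightarrow> q v \<in> V" using bij q_def
    by (metis bij_betw_imp_surj_on inv_into_into)
  have pq: "\<And>v. v \<in> V \<Longrightarrow> p (q v) = v" using bij q_def
    by (meson bij_betw_inv_into_right)
  have qp: "\<And>v. v \<in> V \<Longrightarrow> q (p v) = v" using bij q_def
    by (meson bij_betw_inv_into_left)
  have padd: "p (x + y) = p x + p y" for x y by (simp add: p_def a.add b.add)
  have pscale: "p (sN c x) = sN c (p x)" for c x by (simp add: p_def a.scale b.scale)
  have addV: "\<And>x y. x \<in> V \<Longrightarrow> y \<in> V \<Longrightarrow> x + y \<in> V"
    using subV a.m2.subspace_add by blast
  have scV: "\<And>c x. x \<in> V \<Longrightarrow> sN c x \<in> V"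
    using subV a.m2.subspace_scale by blast
  have qadd: "q (x + y) = q x + q y" if "x \<in> V" "y \<in> V" for x y
  proof -
    have "q (x + y) = q (p (q x) + p (q y))" using that pq by simp
    also have "\<dots> = q (p (q x + q y))" by (simp add: padd)
    also have "\<dots> = q x + q y" using qp addV qV that by simp
    finally show ?thesis .
  qed
  have qscale: "q (sN c x) = sN c (q x)" if "x \<in> V" for c x
  proof -
    have "q (sN c x) = q (sN c (p (q x)))" using that pq by simp
    also have "\<dots> = q (p (sN c (q x)))" by (simp add: pscale)
    also have "\<dots> = sN c (q x)" using qp scV qV that by simp
    finally show ?thesis .
  qed
  define g where "g = (\<lambda>v. \<alpha>' (f (\<beta> (q v))))"
  have lin: "linear_map_between sN sN' V V' g"
    unfolding linear_map_between_def
  proof (intro conjI ballI allI)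
    fix x assume "x \<in> V"
    then show "g x \<in> V'" using assms(11) qV unfolding g_def by auto
  next
    fix x y assume "x \<in> V" "y \<in> V"
    then show "g (x + y) = g x + g y" unfolding g_def
      by (simp add: qadd a'.add b.add f.add)
  next
    fix c x assume "x \<in> V"
    then show "g (sN c x) = sN' c (g x)" unfolding g_def
      by (simp add: qscale a'.scale b.scale f.scale)
  qed
  have eq: "\<forall>x\<in>\<beta> ` V. g (\<alpha> x) = \<alpha>' (f x)"
  proof
    fix x assume "x \<in> \<beta> ` V"
    then obtain u where u: "u \<in> V" "x = \<beta> u" by auto
    have "q (\<alpha> x) = u" using qp[OF u(1)] u(2) p_def by simp
    then show "g (\<alpha> x) = \<alpha>' (f x)" using u g_def by simp
  qed
  have uniq: "\<forall>v\<in>V. h v = g v" if "linear_map_between sN sN' V V' h"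
      "\<forall>x\<in>\<beta> ` V. h (\<alpha> x) = \<alpha>' (f x)" for h
  proof
    fix v assume v: "v \<in> V"
    have "\<alpha> (\<beta> (q v)) = v" using pq[OF v] p_def by simp
    moreover have "\<beta> (q v) \<in> \<beta> ` V" using qV[OF v] by simp
    ultimately have "h v = \<alpha>' (f (\<beta> (q v)))" using that(2) by metis
    then show "h v = g v" by (simp add: g_def)
  qed
  show ?thesis using lin eq uniq by blast
qed

end
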